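(* Let $R$ be an integral domain whose unit group contains an element different from $1$, and let $\varphi$ be an automorphism of $\overline{\mathbf{A}_4(R)}=\mathbf{A}_4(R)/\mathbf{U}_4(R)'$. Then there exist a permutation $\sigma$ of the set $\{(1,2),(2,3),(3,4)\}$ and automorphisms $\Phi_{1,2},\Phi_{2,3},\Phi_{3,4}$ of the additive group $(R,+)$ such that $\varphi(\bar e_{i,j}(r))=\bar e_{\sigma(i,j)}(\Phi_{i,j}(r))$ for all $(i,j)\in\{(1,2),(2,3),(3,4)\}$ and all $r\in R$.
   Context: $\mathbf{A}_4(R)$ is the group of upper triangular $4\times4$ matrices over $R$ with diagonal $(1,u_2,u_3,1)$, $u_2,u_3\in U(R)$; $\mathbf{U}_4(R)$ its subgroup of upper unitriangular matrices and $\mathbf{U}_4(R)'$ the commutator subgroup of $\mathbf{U}_4(R)$. For $i<j$ and $r\in R$, $e_{i,j}(r)$ is the unitriangular matrix with $(i,j)$-entry $r$ and all other off-diagonal entries $0$, and $\bar e_{i,j}(r)$ its image in $\overline{\mathbf{A}_4(R)}$; for a pair $(k,l)$ we write $\bar e_{(k,l)}=\bar e_{k,l}$. *)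

theory Defs
  imports "HOL-Algebra.Algebra" "HOL-Combinatorics.Permutations"
begin

text \<open>4x4 matrices over a ring are functions nat => nat => 'a, indexed by 1..4,
  and required to vanish outside the index range (so equality is matrix equality).\<close>

definition mat4_mult :: "(nat \<Rightarrow> nat \<Rightarrow> 'a::comm_ring_1) \<Rightarrow> (nat \<Rightarrow> nat \<Rightarrow> 'a) \<Rightarrow> (nat \<Rightarrow> nat \<Rightarrow> 'a)" where
  "mat4_mult A B = (\<lambda>i j. if i \<in> {1..4} \<and> j \<in> {1..4} then (\<Sum>k\<in>{1..4}. A i k * B k j) else 0)"

definition mat4_one :: "nat \<Rightarrow> nat \<Rightarrow> 'a::comm_ring_1" where
  "mat4_one = (\<lambda>i j. if i \<in> {1..4} \<and> i = j then 1 else 0)"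

definition A4_carrier :: "(nat \<Rightarrow> nat \<Rightarrow> 'a::comm_ring_1) set" where
  "A4_carrier = {M. (\<forall>i j. (i \<notin> {1..4} \<or> j \<notin> {1..4}) \<longrightarrow> M i j = 0)
                    \<and> (\<forall>i j. j < i \<longrightarrow> M i j = 0)
                    \<and> M 1 1 = 1 \<and> M 4 4 = 1 \<and> M 2 2 dvd 1 \<and> M 3 3 dvd 1}"

definition A4 :: "(nat \<Rightarrow> nat \<Rightarrow> 'a::comm_ring_1) monoid" where
  "A4 = \<lparr>carrier = A4_carrier, monoid.mult = mat4_mult, one = mat4_one\<rparr>"

definition U4 :: "(nat \<Rightarrow> nat \<Rightarrow> 'a::comm_ring_1) monoid" where
  "U4 = A4\<lparr>carrier := {M \<in> A4_carrier. M 2 2 = 1 \<and> M 3 3 = 1}\<rparr>"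

definition U4' :: "(nat \<Rightarrow> nat \<Rightarrow> 'a::comm_ring_1) set" where
  "U4' = derived U4 (carrier U4)"

definition A4bar :: "(nat \<Rightarrow> nat \<Rightarrow> 'a::comm_ring_1) set monoid" where
  "A4bar = A4 Mod U4'"

definition elem :: "nat \<Rightarrow> nat \<Rightarrow> 'a::comm_ring_1 \<Rightarrow> (nat \<Rightarrow> nat \<Rightarrow> 'a)" where
  "elem i j r = (\<lambda>a b. if a \<in> {1..4} \<and> a = b then 1 else if a = i \<and> b = j then r else 0)"

definition elem_bar :: "nat \<Rightarrow> nat \<Rightarrow> 'a::comm_ring_1 \<Rightarrow> (nat \<Rightarrow> nat \<Rightarrow> 'a) set" where
  "elem_bar i j r = U4' #>\<^bsub>A4\<^esub> elem i j r"

end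

theory Submission
  imports Defs
begin


definition mk :: "'a::comm_ring_1 \<Rightarrow> 'a \<Rightarrow> 'a \<Rightarrow> 'a \<Rightarrow> 'a \<Rightarrow> 'a \<Rightarrow> 'a \<Rightarrow> 'a \<Rightarrow> (nat \<Rightarrow> nat \<Rightarrow> 'a)" where
 "mk a b c d e g u v = (\<lambda>i j. if i = 1 \<and> j = 1 then 1 else if i = 1 \<and> j = 2 then a
   else if i = 1 \<and> j = 3 then b else if i = 1 \<and> j = 4 then c
   else if i = 2 \<and> j = 2 then u else if i = 2 \<and> j = 3 then d else if i = 2 \<and> j = 4 then e
   else if i = 3 \<and> j = 3 then v else if i = 3 \<and> j = 4 then g else if i = 4 \<and> j = 4 then 1 else 0)"

lemma nat4: "(i::nat) = 1 \<or> i = 2 \<or> i = 3 \<or> i = 4 \<or> i \<notin> {1..4}" by auto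

lemma sum4: "(\<Sum>k\<in>{1..4::nat}. f k) = f 1 + f 2 + f 3 + f 4"
proof -
  have "{1..4::nat} = {1,2,3,4}" by auto
  then show ?thesis by (simp add: algebra_simps)
qed

lemma mk_mult: "mat4_mult (mk a b c d e g u v) (mk a' b' c' d' e' g' u' v') =
  mk (a' + a*u') (b' + a*d' + b*v') (c' + a*e' + b*g' + c) (u*d' + d*v') (u*e' + d*g' + e) (v*g' + g) (u*u') (v*v')"
  unfolding mat4_mult_def sum4
  apply (rule ext)+
  subgoal for i j using nat4[of i] nat4[of j] by (elim disjE) (auto simp: mk_def algebra_simps)
  done

lemma mk_eq: "mk a b c d e g u v = mk a' b' c' d' e' g' u' v' \<longleftrightarrow>
   a = a' \<and> b = b' \<and> c = c' \<and> d = d' \<and> e = e' \<and> g = g' \<and> u = u' \<and> v = v'"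
proof
  assume h: "mk a b c d e g u v = mk a' b' c' d' e' g' u' v'"
  have "\<And>i j. mk a b c d e g u v i j = mk a' b' c' d' e' g' u' v' i j" using h by simp
  from this[of 1 2] this[of 1 3] this[of 1 4] this[of 2 3] this[of 2 4] this[of 3 4] this[of 2 2] this[of 3 3]
  show "a = a' \<and> b = b' \<and> c = c' \<and> d = d' \<and> e = e' \<and> g = g' \<and> u = u' \<and> v = v'"
    by (simp add: mk_def)
qed simp

lemma carrier_mk: "M \<in> A4_carrier \<Longrightarrow> M = mk (M 1 2) (M 1 3) (M 1 4) (M 2 3) (M 2 4) (M 3 4) (M 2 2) (M 3 3)"
  unfolding A4_carrier_def
  apply (rule ext)+
  subgoal for i j using nat4[of i] nat4[of j] by (elim disjE) (auto simp: mk_def)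
  done

lemma mk_carrier: "mk a b c d e g u v \<in> A4_carrier \<longleftrightarrow> u dvd 1 \<and> v dvd 1"
  unfolding A4_carrier_def by (auto simp: mk_def)

lemma one_mk: "mat4_one = mk 0 0 0 0 0 0 1 1"
  apply (rule ext)+
  subgoal for i j using nat4[of i] nat4[of j] by (elim disjE) (auto simp: mk_def mat4_one_def)
  done

lemma elem_mk1: "elem 1 2 r = mk r 0 0 0 0 0 1 1"
  apply (rule ext)+
  subgoal for i j using nat4[of i] nat4[of j] by (elim disjE) (auto simp: mk_def elem_def)
  done
lemma elem_mk2: "elem 2 3 r = mk 0 0 0 r 0 0 1 1"
  apply (rule ext)+
  subgoal for i j using nat4[of i] nat4[of j] by (elim disjE) (auto simp: mk_def elem_def)
  done
lemma elem_mk3: "elem 3 4 r = mk 0 0 0 0 0 r 1 1"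
  apply (rule ext)+
  subgoal for i j using nat4[of i] nat4[of j] by (elim disjE) (auto simp: mk_def elem_def)
  done

lemma A4_cases:
  assumes "M \<in> A4_carrier"
  obtains a b c d e g u v where "M = mk a b c d e g u v" "u dvd 1" "v dvd 1"
  using carrier_mk[OF assms] assms mk_carrier by metis




definition mkinv :: "'a::comm_ring_1 \<Rightarrow> 'a \<Rightarrow> 'a \<Rightarrow> 'a \<Rightarrow> 'a \<Rightarrow> 'a \<Rightarrow> 'a \<Rightarrow> 'a \<Rightarrow> 'a \<Rightarrow> 'a \<Rightarrow> (nat \<Rightarrow> nat \<Rightarrow> 'a)" where
  "mkinv a b c d e g u v U V = mk (-a*U) ((a*U*d - b)*V) (-(c - a*U*e + (a*U*d - b)*V*g)) (-d*U*V) (U*d*V*g - U*e) (-g*V) U V"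

lemma unit_mult: "(u::'a::comm_ring_1) dvd 1 \<Longrightarrow> w dvd 1 \<Longrightarrow> u * w dvd 1"
  by (metis mult_dvd_mono mult_1_left)

lemma unit_simp: "u * ui = (1::'a::comm_ring_1) \<Longrightarrow> u * (ui * x) = x"
  by (metis mult.assoc mult_1_left)

lemma mkinv_l: "u * ui = 1 \<Longrightarrow> v * vi = 1 \<Longrightarrow> mat4_mult (mkinv a b c d e g u v ui vi) (mk a b c d e g u v) = mat4_one"
  unfolding mkinv_def mk_mult one_mk mk_eq
  by (simp add: algebra_simps unit_simp mult.commute[of ui u] mult.commute[of vi v])

lemma group_A4: "group (A4 :: (nat \<Rightarrow> nat \<Rightarrow> 'a::comm_ring_1) monoid)"
proof (rule groupI)
  fix x y :: "nat \<Rightarrow> nat \<Rightarrow> 'a" assume "x \<in> carrier A4" "y \<in> carrier A4"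
  then show "x \<otimes>\<^bsub>A4\<^esub> y \<in> carrier A4"
    by (auto simp: A4_def mk_mult mk_carrier elim!: A4_cases intro: unit_mult)
next
  show "\<one>\<^bsub>A4\<^esub> \<in> carrier (A4 :: (nat \<Rightarrow> nat \<Rightarrow> 'a) monoid)" by (simp add: A4_def one_mk mk_carrier)
next
  fix x y z :: "nat \<Rightarrow> nat \<Rightarrow> 'a" assume "x \<in> carrier A4" "y \<in> carrier A4" "z \<in> carrier A4"
  then show "x \<otimes>\<^bsub>A4\<^esub> y \<otimes>\<^bsub>A4\<^esub> z = x \<otimes>\<^bsub>A4\<^esub> (y \<otimes>\<^bsub>A4\<^esub> z)"
    by (auto simp: A4_def mk_mult mk_eq algebra_simps elim!: A4_cases)
next
  fix x :: "nat \<Rightarrow> nat \<Rightarrow> 'a" assume "x \<in> carrier A4"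
  then show "\<one>\<^bsub>A4\<^esub> \<otimes>\<^bsub>A4\<^esub> x = x"
    by (auto simp: A4_def mk_mult one_mk elim!: A4_cases)
next
  fix x :: "nat \<Rightarrow> nat \<Rightarrow> 'a" assume "x \<in> carrier A4"
  then obtain a b c d e g u v where x: "x = mk a b c d e g u v" "u dvd 1" "v dvd 1"
    by (auto simp: A4_def elim!: A4_cases)
  then obtain U V where UV: "1 = u * U" "1 = v * V" by (auto elim!: dvdE)
  show "\<exists>y\<in>carrier A4. y \<otimes>\<^bsub>A4\<^esub> x = \<one>\<^bsub>A4\<^esub>"
  proof (intro bexI)
    show "mkinv a b c d e g u v U V \<otimes>\<^bsub>A4\<^esub> x = \<one>\<^bsub>A4\<^esub>"
      using mkinv_l[of u U v V] UV x by (simp add: A4_def)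
    show "mkinv a b c d e g u v U V \<in> carrier A4"
      using UV by (auto simp: A4_def mkinv_def mk_carrier intro: dvdI[of _ _ u] dvdI[of _ _ v] simp: mult.commute)
  qed
qed




definition Kset :: "(nat \<Rightarrow> nat \<Rightarrow> 'a::comm_ring_1) set" where
  "Kset = {M. \<exists>b c e. M = mk 0 b c 0 e 0 1 1}"

lemma mk_in_K: "mk a b c d e g u v \<in> Kset \<longleftrightarrow> a = 0 \<and> d = 0 \<and> g = 0 \<and> u = 1 \<and> v = 1"
  by (auto simp: Kset_def mk_eq)

lemma U4H: "carrier U4 = {M. \<exists>a b c d e g. M = mk a b c d e g 1 1}"
proof (rule equalityI; rule subsetI)
  fix M :: "nat \<Rightarrow> nat \<Rightarrow> 'a" assume "M \<in> carrier U4"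
  then have M: "M \<in> A4_carrier" "M 2 2 = 1" "M 3 3 = 1" by (auto simp: U4_def A4_def)
  then obtain a b c d e g u v where Me: "M = mk a b c d e g u v" by (auto elim: A4_cases)
  with M have "u = 1" "v = 1" by (simp_all add: mk_def)
  with Me show "M \<in> {M. \<exists>a b c d e g. M = mk a b c d e g 1 1}" by blast
next
  fix M :: "nat \<Rightarrow> nat \<Rightarrow> 'a" assume "M \<in> {M. \<exists>a b c d e g. M = mk a b c d e g 1 1}"
  then show "M \<in> carrier U4" by (auto simp: U4_def A4_def mk_carrier) (simp_all add: mk_def)
qed

lemma U4_eq: "U4 = A4\<lparr>carrier := carrier U4\<rparr>" by (simp add: U4_def)

lemma mult_A4: "x \<otimes>\<^bsub>A4\<^esub> y = mat4_mult x y" by (simp add: A4_def)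
lemma mult_U4: "x \<otimes>\<^bsub>U4\<^esub> y = mat4_mult x y" by (simp add: U4_def A4_def)
lemma one_U4: "\<one>\<^bsub>U4\<^esub> = mat4_one" by (simp add: U4_def A4_def)

lemma inv_A4: "u * ui = 1 \<Longrightarrow> v * vi = 1 \<Longrightarrow>
   inv\<^bsub>A4\<^esub> (mk a b c d e g u v) = (mkinv a b c d e g u v ui vi :: nat \<Rightarrow> nat \<Rightarrow> 'a::comm_ring_1)"
  apply (rule group.inv_equality[OF group_A4])
    apply (simp add: mult_A4 mkinv_l A4_def)
   apply (simp add: A4_def mk_carrier)
   apply (metis dvdI)
  apply (simp add: A4_def mkinv_def mk_carrier)
  apply (metis dvdI mult.commute)
  done

lemma inv_A4_1: "inv\<^bsub>A4\<^esub> (mk a b c d e g 1 1) =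
   (mk (-a) (a*d - b) (-(c - a*e + (a*d-b)*g)) (-d) (d*g - e) (-g) 1 1 :: nat \<Rightarrow> nat \<Rightarrow> 'a::comm_ring_1)"
  by (simp add: inv_A4[of 1 1 1 1] mkinv_def)

lemma subgroup_U4: "subgroup (carrier U4) (A4 :: (nat \<Rightarrow> nat \<Rightarrow> 'a::comm_ring_1) monoid)"
proof (rule group.subgroupI[OF group_A4])
  show "carrier U4 \<subseteq> carrier (A4 :: (nat \<Rightarrow> nat \<Rightarrow> 'a) monoid)" by (auto simp: U4H A4_def mk_carrier)
  have "mk 0 0 0 0 0 0 1 1 \<in> carrier (U4 :: (nat \<Rightarrow> nat \<Rightarrow> 'a) monoid)" unfolding U4H by blast
  then show "carrier (U4 :: (nat \<Rightarrow> nat \<Rightarrow> 'a) monoid) \<noteq> {}" by blast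
  fix x y :: "nat \<Rightarrow> nat \<Rightarrow> 'a" assume "x \<in> carrier U4"
  then show "inv\<^bsub>A4\<^esub> x \<in> carrier U4" by (auto simp: U4H inv_A4_1 mk_eq)
  assume "y \<in> carrier U4"
  with \<open>x \<in> carrier U4\<close> show "x \<otimes>\<^bsub>A4\<^esub> y \<in> carrier U4" by (auto simp: U4H mult_A4 mk_mult mk_eq)
qed

lemma inv_U4: "x \<in> carrier U4 \<Longrightarrow> inv\<^bsub>U4\<^esub> x = inv\<^bsub>A4\<^esub> x"
  by (metis U4_eq group.m_inv_consistent[OF group_A4 subgroup_U4])

lemma U4'_sub: "U4' \<subseteq> (Kset :: (nat \<Rightarrow> nat \<Rightarrow> 'a::comm_ring_1) set)"
proof
  fix x :: "nat \<Rightarrow> nat \<Rightarrow> 'a" assume "x \<in> U4'"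
  then have "x \<in> generate U4 (derived_set U4 (carrier U4))" by (simp add: U4'_def derived_def)
  then show "x \<in> Kset"
  proof induction
    case one then show ?case by (simp add: one_U4 one_mk mk_in_K)
  next
    case (incl h)
    then show ?case
      by (auto simp: U4H inv_U4 mult_U4 inv_A4_1 mk_mult mk_in_K)
  next
    case (inv h)
    then have hK: "h \<in> Kset" and hU: "h \<in> carrier U4"
      by (auto simp: U4H inv_U4 mult_U4 inv_A4_1 mk_mult mk_in_K mk_eq)
    then show ?case
      by (auto simp: inv_U4 Kset_def inv_A4_1 mk_eq)
  next
    case (eng h1 h2)
    then show ?case by (auto simp: Kset_def mult_U4 mk_mult mk_eq)
  qed
qed

lemma U4'_sup: "(Kset :: (nat \<Rightarrow> nat \<Rightarrow> 'a::comm_ring_1) set) \<subseteq> U4'"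
proof
  fix x :: "nat \<Rightarrow> nat \<Rightarrow> 'a" assume "x \<in> Kset"
  then obtain b c e where x: "x = mk 0 b c 0 e 0 1 1" by (auto simp: Kset_def)
  define D where "D = derived_set U4 (carrier (U4 :: (nat \<Rightarrow> nat \<Rightarrow> 'a) monoid))"
  have com: "mat4_mult (mat4_mult (mat4_mult h1 h2) (inv\<^bsub>A4\<^esub> h1)) (inv\<^bsub>A4\<^esub> h2) \<in> D"
    if "h1 \<in> carrier U4" "h2 \<in> carrier U4" for h1 h2
    using that unfolding D_def by (auto simp: mult_U4 inv_U4)
  have c1: "mk 0 b 0 0 0 0 1 1 \<in> D"
    using com[of "mk b 0 0 0 0 0 1 1" "mk 0 0 0 1 0 0 1 1"] by (simp add: U4H inv_A4_1 mk_mult mk_eq)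
  have c2: "mk 0 0 0 0 e 0 1 1 \<in> D"
    using com[of "mk 0 0 0 e 0 0 1 1" "mk 0 0 0 0 0 1 1 1"] by (simp add: U4H inv_A4_1 mk_mult mk_eq)
  have c3: "mk 0 0 c 0 0 0 1 1 \<in> D"
    using com[of "mk c 0 0 0 0 0 1 1" "mk 0 0 0 0 1 0 1 1"] by (simp add: U4H inv_A4_1 mk_mult mk_eq)
  have "x = mat4_mult (mat4_mult (mk 0 b 0 0 0 0 1 1) (mk 0 0 0 0 e 0 1 1)) (mk 0 0 c 0 0 0 1 1)"
    by (simp add: x mk_mult)
  then have "x = (mk 0 b 0 0 0 0 1 1 \<otimes>\<^bsub>U4\<^esub> mk 0 0 0 0 e 0 1 1) \<otimes>\<^bsub>U4\<^esub> mk 0 0 c 0 0 0 1 1"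
    by (simp add: mult_U4)
  moreover have "... \<in> generate U4 D"
    by (intro generate.eng generate.incl c1 c2 c3)
  ultimately show "x \<in> U4'" by (simp add: U4'_def derived_def D_def)
qed

lemma U4'_eq: "U4' = Kset" using U4'_sub U4'_sup by blast




type_synonym 'a tup = "'a \<times> 'a \<times> 'a \<times> 'a \<times> 'a"

definition piM :: "(nat \<Rightarrow> nat \<Rightarrow> 'a::comm_ring_1) \<Rightarrow> 'a tup" where
  "piM M = (M 1 2, M 2 3, M 3 4, M 2 2, M 3 3)"

fun mkT :: "'a::comm_ring_1 tup \<Rightarrow> (nat \<Rightarrow> nat \<Rightarrow> 'a)" where
  "mkT (a, b, c, u, v) = mk a 0 0 b 0 c u v"

definition Tset :: "'a::comm_ring_1 tup set" where
  "Tset = {(a, b, c, u, v). u dvd 1 \<and> v dvd 1}"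

fun tm :: "'a::comm_ring_1 tup \<Rightarrow> 'a tup \<Rightarrow> 'a tup" where
  "tm (a, b, c, u, v) (x, y, z, p, q) = (x + a*p, u*y + b*q, v*z + c, u*p, v*q)"

lemma piM_mk[simp]: "piM (mk a b c d e g u v) = (a, d, g, u, v)"
  by (simp add: piM_def mk_def)

lemma subgroup_K: "subgroup (Kset :: (nat \<Rightarrow> nat \<Rightarrow> 'a::comm_ring_1) set) A4"
proof (rule group.subgroupI[OF group_A4])
  show "Kset \<subseteq> carrier (A4 :: (nat \<Rightarrow> nat \<Rightarrow> 'a) monoid)" by (auto simp: Kset_def A4_def mk_carrier)
  have "mk 0 0 0 0 0 0 1 1 \<in> (Kset :: (nat \<Rightarrow> nat \<Rightarrow> 'a) set)" by (auto simp: mk_in_K)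
  then show "(Kset :: (nat \<Rightarrow> nat \<Rightarrow> 'a) set) \<noteq> {}" by blast
  fix x y :: "nat \<Rightarrow> nat \<Rightarrow> 'a" assume "x \<in> Kset"
  then show "inv\<^bsub>A4\<^esub> x \<in> Kset" by (auto simp: Kset_def inv_A4_1 mk_eq)
  assume "y \<in> Kset"
  with \<open>x \<in> Kset\<close> show "x \<otimes>\<^bsub>A4\<^esub> y \<in> Kset" by (auto simp: Kset_def mult_A4 mk_mult mk_eq)
qed

lemma A4_unit_cases:
  assumes "M \<in> carrier (A4 :: (nat \<Rightarrow> nat \<Rightarrow> 'a::comm_ring_1) monoid)"
  obtains a b c d e g u v ui vi where "M = mk a b c d e g u v" "u * ui = 1" "v * vi = 1"
proof -
  from assms obtain a b c d e g u v where "M = mk a b c d e g u v" "u dvd 1" "v dvd 1"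
    by (auto simp: A4_def elim: A4_cases)
  then show ?thesis using that by (metis dvdE)
qed

lemma normal_K: "(Kset :: (nat \<Rightarrow> nat \<Rightarrow> 'a::comm_ring_1) set) \<lhd> A4"
  unfolding group.normal_inv_iff[OF group_A4]
proof (intro conjI ballI subgroup_K)
  fix x h :: "nat \<Rightarrow> nat \<Rightarrow> 'a" assume x: "x \<in> carrier A4" and h: "h \<in> Kset"
  from x obtain a b c d e g u v ui vi where xe: "x = mk a b c d e g u v" "u * ui = 1" "v * vi = 1"
    by (rule A4_unit_cases)
  from h obtain b' c' e' where he: "h = mk 0 b' c' 0 e' 0 1 1" by (auto simp: Kset_def)
  show "x \<otimes>\<^bsub>A4\<^esub> h \<otimes>\<^bsub>A4\<^esub> inv\<^bsub>A4\<^esub> x \<in> Kset"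
    using xe by (simp add: he inv_A4 mult_A4 mkinv_def mk_mult mk_in_K algebra_simps unit_simp
       mult.commute[of ui u] mult.commute[of vi v])
qed

lemma coset_char:
  assumes "M \<in> A4_carrier"
  shows "Kset #>\<^bsub>A4\<^esub> M = {N \<in> A4_carrier. piM N = piM (M :: nat \<Rightarrow> nat \<Rightarrow> 'a::comm_ring_1)}"
proof (rule equalityI; rule subsetI)
  from assms obtain a b c d e g u v ui vi where xe: "M = mk a b c d e g u v" "u * ui = 1" "v * vi = 1"
    by (rule A4_unit_cases[unfolded A4_def, simplified])
  fix N assume "N \<in> Kset #>\<^bsub>A4\<^esub> M"
  then obtain h where "h \<in> Kset" "N = mat4_mult h M" by (auto simp: r_coset_def mult_A4)
  then show "N \<in> {N \<in> A4_carrier. piM N = piM M}"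
  proof -
    have "u dvd 1" "v dvd 1" using xe by (metis dvdI)+
    then show ?thesis using xe \<open>h \<in> Kset\<close> \<open>N = mat4_mult h M\<close> by (auto simp: Kset_def mk_mult mk_carrier)
  qed
next
  from assms obtain a b c d e g u v ui vi where xe: "M = mk a b c d e g u v" "u * ui = 1" "v * vi = 1"
    by (rule A4_unit_cases[unfolded A4_def, simplified])
  fix N assume "N \<in> {N \<in> A4_carrier. piM N = piM M}"
  then obtain b' c' e' where Ne: "N = mk a b' c' d e' g u v" using xe
    by (auto elim!: A4_cases)
  define h where "h = mat4_mult N (mkinv a b c d e g u v ui vi)"
  have "h \<in> Kset" using xe unfolding h_def
    by (simp add: Ne mkinv_def mk_mult mk_in_K algebra_simps unit_simp
       mult.commute[of ui u] mult.commute[of vi v])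
  moreover have "N = mat4_mult h M"
    unfolding h_def using xe
    by (simp add: Ne mkinv_def mk_mult mk_eq algebra_simps unit_simp
       mult.commute[of ui u] mult.commute[of vi v])
  ultimately show "N \<in> Kset #>\<^bsub>A4\<^esub> M" by (auto simp: r_coset_def mult_A4)
qed

lemma carrier_A4: "carrier A4 = A4_carrier" by (simp add: A4_def)

definition Fb :: "'a::comm_ring_1 tup \<Rightarrow> (nat \<Rightarrow> nat \<Rightarrow> 'a) set" where
  "Fb t = Kset #>\<^bsub>A4\<^esub> mkT t"

lemma mkT_carrier: "t \<in> Tset \<Longrightarrow> mkT t \<in> A4_carrier"
  by (cases t) (auto simp: Tset_def mk_carrier)

lemma piM_mkT[simp]: "piM (mkT t) = t"
  by (cases t) auto

lemma piM_Tset: "M \<in> A4_carrier \<Longrightarrow> piM M \<in> Tset"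
  by (auto simp: Tset_def elim!: A4_cases)

lemma Fb_fiber: "t \<in> Tset \<Longrightarrow> Fb t = {N \<in> A4_carrier. piM N = t}"
  unfolding Fb_def by (simp add: coset_char mkT_carrier)

lemma coset_F: "M \<in> A4_carrier \<Longrightarrow> Kset #>\<^bsub>A4\<^esub> M = Fb (piM M)"
  by (simp add: coset_char Fb_fiber piM_Tset)

lemma carrier_A4bar: "carrier A4bar = Fb ` Tset"
proof -
  have "carrier A4bar = {Kset #>\<^bsub>A4\<^esub> M | M. M \<in> A4_carrier}"
    by (auto simp: A4bar_def FactGroup_def RCOSETS_def U4'_eq carrier_A4)
  also have "... = Fb ` Tset"
  proof (rule equalityI; rule subsetI)
    fix CC assume "CC \<in> {Kset #>\<^bsub>A4\<^esub> M | M. M \<in> A4_carrier}"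
    then obtain M where "M \<in> A4_carrier" "CC = Kset #>\<^bsub>A4\<^esub> M" by auto
    then show "CC \<in> Fb ` Tset" by (simp add: coset_F piM_Tset)
  next
    fix CC assume "CC \<in> Fb ` Tset"
    then obtain t where "t \<in> Tset" "CC = Fb t" by auto
    then show "CC \<in> {Kset #>\<^bsub>A4\<^esub> M | M. M \<in> A4_carrier}"
      using mkT_carrier unfolding Fb_def by blast
  qed
  finally show ?thesis .
qed

lemma Fb_inj: "inj_on Fb Tset"
proof (rule inj_onI)
  fix s t assume st: "s \<in> Tset" "t \<in> Tset" "Fb s = Fb t"
  have "mkT s \<in> Fb s" using st(1) by (simp add: Fb_fiber mkT_carrier)
  then have "mkT s \<in> Fb t" using st(3) by simp
  then show "s = t" using st(2) by (simp add: Fb_fiber)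
qed

lemma tm_Tset: "s \<in> Tset \<Longrightarrow> t \<in> Tset \<Longrightarrow> tm s t \<in> Tset"
  by (cases s; cases t) (auto simp: Tset_def unit_mult)

lemma Fb_mult: "s \<in> Tset \<Longrightarrow> t \<in> Tset \<Longrightarrow> Fb s \<otimes>\<^bsub>A4bar\<^esub> Fb t = Fb (tm s t)"
proof -
  assume st: "s \<in> Tset" "t \<in> Tset"
  have "Fb s \<otimes>\<^bsub>A4bar\<^esub> Fb t = Fb s <#>\<^bsub>A4\<^esub> Fb t" by (simp add: A4bar_def FactGroup_def)
  also have "... = Kset #>\<^bsub>A4\<^esub> (mkT s \<otimes>\<^bsub>A4\<^esub> mkT t)" unfolding Fb_def
    by (rule normal.rcos_sum[OF normal_K]) (simp_all add: carrier_A4 mkT_carrier st)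
  also have "... = Fb (piM (mat4_mult (mkT s) (mkT t)))"
  proof -
    have "mat4_mult (mkT s) (mkT t) \<in> A4_carrier"
      using st mkT_carrier monoid.m_closed[OF group.is_monoid[OF group_A4]] unfolding mult_A4 carrier_A4 by blast
    then show ?thesis by (simp add: coset_F mult_A4)
  qed
  also have "piM (mat4_mult (mkT s) (mkT t)) = tm s t"
    by (cases s; cases t) (simp add: mk_mult algebra_simps)
  finally show ?thesis .
qed

lemma elem_bar_F:
  "elem_bar 1 2 r = Fb (r, 0, 0, 1, 1)"
  "elem_bar 2 3 r = Fb (0, r, 0, 1, 1)"
  "elem_bar 3 4 r = Fb (0, 0, r, 1, 1)"
  unfolding elem_bar_def Fb_def U4'_eq elem_mk1 elem_mk2 elem_mk3 mkT.simps by simp_all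




definition Nset :: "'a::comm_ring_1 tup set" where
  "Nset = {(a, b, c, 1, 1) | a b c. True}"

definition Pc :: "'a::comm_ring_1 tup \<Rightarrow> bool" where
  "Pc x \<longleftrightarrow> (\<forall>g\<in>Tset. \<forall>y\<in>Tset. tm y g = tm g x \<longrightarrow> tm x y = tm y x)"

lemma Nset_Tset: "Nset \<subseteq> Tset"
  by (auto simp: Nset_def Tset_def)

lemma unit_nz: "(u::'a::idom) dvd 1 \<Longrightarrow> u \<noteq> 0" by auto

lemma Pc_iff:
  assumes "x \<in> Tset"
  shows "Pc x \<longleftrightarrow> x \<in> (Nset :: 'a::idom tup set)"
proof
  assume "x \<in> Nset"
  then obtain a b c where x: "x = (a, b, c, 1, 1)" by (auto simp: Nset_def)
  show "Pc x" unfolding Pc_def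
  proof (intro ballI impI)
    fix g y assume g: "g \<in> Tset" and y: "y \<in> Tset" and e: "tm y g = tm g x"
    obtain p q s u v where gg: "g = (p, q, s, u, v)" by (cases g) auto
    obtain y1 y2 y3 yu yv where yy: "y = (y1, y2, y3, yu, yv)" by (cases y) auto
    have "u \<noteq> 0" "v \<noteq> 0" using g by (auto simp: gg Tset_def)
    then have "yu = 1" "yv = 1" using e by (auto simp: gg yy x)
    then show "tm x y = tm y x" by (simp add: x yy algebra_simps)
  qed
next
  assume P: "Pc x"
  obtain a b c u v where x: "x = (a, b, c, u, v)" by (cases x) auto
  have uv: "u dvd 1" "v dvd 1" using assms by (auto simp: x Tset_def)
  define y where "y = (a + u - 1, b, c + 1 - v, u, v)"
  define g0 :: "'a tup" where "g0 = (1, 0, 1, 1, 1)"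
  have g0T: "g0 \<in> Tset" by (simp add: g0_def Tset_def)
  have yT: "y \<in> Tset" using uv by (simp add: y_def Tset_def)
  have "tm y g0 = tm g0 x" by (simp add: x y_def g0_def algebra_simps)
  then have "tm x y = tm y x"
    using P g0T yT unfolding Pc_def by blast
  then have e1: "(u - 1) * (u - 1) = 0" and e2: "(v - 1) * (v - 1) = 0"
    by (auto simp: x y_def algebra_simps)
  then have "u = 1" "v = 1" by auto
  then show "x \<in> Nset" by (auto simp: x Nset_def)
qed

definition Cn :: "'a::comm_ring_1 tup \<Rightarrow> 'a tup set" where
  "Cn g = {n \<in> Nset. tm n g = tm g n}"

definition ax :: "nat \<times> nat \<Rightarrow> 'a::comm_ring_1 \<Rightarrow> 'a tup" where
  "ax p r = (if p = (1,2) then (r, 0, 0, 1, 1) else if p = (2,3) then (0, r, 0, 1, 1) else (0, 0, r, 1, 1))"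

definition crd :: "nat \<times> nat \<Rightarrow> 'a::comm_ring_1 tup \<Rightarrow> 'a" where
  "crd p t = (if p = (1,2) then fst t else if p = (2,3) then fst (snd t) else fst (snd (snd t)))"

definition Xs :: "nat \<times> nat \<Rightarrow> 'a::comm_ring_1 tup set" where
  "Xs p = range (ax p)"

abbreviation "Sp \<equiv> {(1::nat,2::nat),(2,3),(3,4)}"

lemma crd_ax[simp]: "crd p (ax p r) = r"
  by (auto simp: crd_def ax_def)

lemma ax_inj: "ax p r = ax p s \<Longrightarrow> r = s"
  using crd_ax by metis

lemma ax_add: "p \<in> Sp \<Longrightarrow> ax p (r + s) = tm (ax p r) (ax p s)"
  by (auto simp: ax_def add.commute)

lemma ax_T: "ax p r \<in> Tset"
  by (auto simp: ax_def Tset_def)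

lemma ax_N: "ax p r \<in> Nset"
  by (auto simp: ax_def Nset_def)

lemma Cn_eq: "g \<in> Tset \<Longrightarrow> g = (p, q, s, u, v) \<Longrightarrow>
   Cn g = {(a, b, c, 1, 1) | a b c. (a = 0 \<or> u = (1::'a::idom)) \<and> (b = 0 \<or> v = u) \<and> (c = 0 \<or> v = 1)}"
proof -
  have k1: "a * u = a \<longleftrightarrow> a = 0 \<or> u = 1" for a u :: 'a
    by (metis mult_cancel_left mult.right_neutral)
  have k2: "b * v = u * b \<longleftrightarrow> b = 0 \<or> v = u" for b u v :: 'a
    by (metis mult_cancel_left mult.commute)
  have k3: "c = v * c \<longleftrightarrow> c = 0 \<or> v = 1" for c v :: 'a
    by (metis mult_cancel_left mult.right_neutral mult.commute)
  assume "g = (p, q, s, u, v)"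
  then show ?thesis
    unfolding Cn_def Nset_def using k1 k2 k3 by (auto simp: add.commute)
qed

lemma Xs_eq: "p \<in> Sp \<Longrightarrow> Xs p = {t. \<exists>r. t = ax p r}"
  by (auto simp: Xs_def)

lemma Cn_cases:
  assumes "g \<in> Tset"
  shows "Cn g = Nset \<or> Cn g = Xs (1,2) \<or> Cn g = Xs (2,3) \<or> Cn g = Xs (3,4) \<or> Cn g = {(0::'a::idom, 0, 0, 1, 1)}"
proof -
  obtain p q s u v where gg: "g = (p, q, s, u, v)" by (cases g) auto
  note C = Cn_eq[OF assms gg]
  show ?thesis
  proof (cases "u = 1")
    case u: True
    show ?thesis
    proof (cases "v = 1")
      case True then show ?thesis using u by (auto simp: C Nset_def)
    next
      case False then have "Cn g = Xs (1,2)" using u by (auto simp: C Xs_def ax_def)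
      then show ?thesis by blast
    qed
  next
    case u: False
    show ?thesis
    proof (cases "v = u")
      case True then have "Cn g = Xs (2,3)" using u by (auto simp: C Xs_def ax_def)
      then show ?thesis by blast
    next
      case vu: False
      show ?thesis
      proof (cases "v = 1")
        case True then have "Cn g = Xs (3,4)" using u vu by (auto simp: C Xs_def ax_def)
        then show ?thesis by blast
      next
        case False then have "Cn g = {(0, 0, 0, 1, 1)}" using u vu by (auto simp: C)
        then show ?thesis by blast
      qed
    qed
  qed
qed

lemma Cn_axes:
  assumes "w dvd 1" "w \<noteq> (1::'a::idom)"
  shows "Cn (0, 0, 0, 1, w) = Xs (1,2)" "Cn (0, 0, 0, w, w) = Xs (2,3)" "Cn (0, 0, 0, w, 1) = Xs (3,4)"
    "(0, 0, 0, 1, w) \<in> Tset" "(0, 0, 0, w, w) \<in> Tset" "(0, 0, 0, w, 1) \<in> Tset"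
  using assms by (auto simp: Cn_eq[OF _ refl] Xs_def ax_def Tset_def)




locale tauto =
  fixes f :: "'a::idom tup \<Rightarrow> 'a tup" and w :: 'a
  assumes bij: "bij_betw f Tset Tset"
    and hom: "\<And>x y. x \<in> Tset \<Longrightarrow> y \<in> Tset \<Longrightarrow> f (tm x y) = tm (f x) (f y)"
    and w: "w dvd 1" "w \<noteq> 1"
begin

lemma inj: "inj_on f Tset" using bij by (simp add: bij_betw_def)
lemma img: "f ` Tset = Tset" using bij by (simp add: bij_betw_def)
lemma fT: "x \<in> Tset \<Longrightarrow> f x \<in> Tset" using img by blast
lemma surj: "y \<in> Tset \<Longrightarrow> \<exists>x\<in>Tset. y = f x" using img by blast

lemma f_eq: "x \<in> Tset \<Longrightarrow> y \<in> Tset \<Longrightarrow> f x = f y \<longleftrightarrow> x = y"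
  using inj by (auto dest: inj_onD)

lemma Pc_f: assumes x: "x \<in> Tset" shows "Pc (f x) \<longleftrightarrow> Pc x"
proof
  assume P: "Pc x"
  show "Pc (f x)" unfolding Pc_def
  proof (intro ballI impI)
    fix g' y' assume g': "g' \<in> Tset" and y': "y' \<in> Tset" and e: "tm y' g' = tm g' (f x)"
    obtain g where g: "g \<in> Tset" "g' = f g" using surj g' by blast
    obtain y where y: "y \<in> Tset" "y' = f y" using surj y' by blast
    have "f (tm y g) = f (tm g x)" using e g y x by (simp add: hom)
    then have "tm y g = tm g x" using f_eq g y x tm_Tset by blast
    then have "tm x y = tm y x" using P g y unfolding Pc_def by blast
    then show "tm (f x) y' = tm y' (f x)" using x y by (metis hom)
  qed
next
  assume P: "Pc (f x)"
  show "Pc x" unfolding Pc_def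
  proof (intro ballI impI)
    fix g y assume g: "g \<in> Tset" and y: "y \<in> Tset" and e: "tm y g = tm g x"
    have "tm (f y) (f g) = tm (f g) (f x)" using e g y x by (metis hom)
    then have "tm (f x) (f y) = tm (f y) (f x)" using P g y fT unfolding Pc_def by blast
    then have "f (tm x y) = f (tm y x)" using x y by (simp add: hom)
    then show "tm x y = tm y x" using f_eq x y tm_Tset by blast
  qed
qed

lemma fN: "x \<in> Tset \<Longrightarrow> f x \<in> Nset \<longleftrightarrow> x \<in> Nset"
  using Pc_f Pc_iff fT by metis

lemma f_Cn: assumes g: "g \<in> Tset" shows "f ` Cn g = Cn (f g)"
proof (rule equalityI; rule subsetI)
  fix m assume "m \<in> f ` Cn g"
  then obtain n where n: "n \<in> Cn g" "m = f n" by auto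
  then have nN: "n \<in> Nset" and c: "tm n g = tm g n" by (auto simp: Cn_def)
  have nT: "n \<in> Tset" using nN Nset_Tset by blast
  have "f n \<in> Nset" using fN nT nN by blast
  moreover have "tm (f n) (f g) = tm (f g) (f n)" using c nT g by (metis hom)
  ultimately show "m \<in> Cn (f g)" using n by (simp add: Cn_def)
next
  fix m assume "m \<in> Cn (f g)"
  then have mN: "m \<in> Nset" and c: "tm m (f g) = tm (f g) m" by (auto simp: Cn_def)
  have "m \<in> Tset" using mN Nset_Tset by blast
  then obtain n where n: "n \<in> Tset" "m = f n" using surj by blast
  have "n \<in> Nset" using fN n mN by blast
  moreover have "f (tm n g) = f (tm g n)" using c n g by (simp add: hom)
  then have "tm n g = tm g n" using f_eq n g tm_Tset by blast
  ultimately show "m \<in> f ` Cn g" using n by (auto simp: Cn_def)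
qed

lemma Xs_T: "Xs p \<subseteq> Tset" unfolding Xs_def using ax_T by blast

lemma f_Nset: "f ` Nset = Nset"
proof (rule equalityI; rule subsetI)
  fix m :: "'a tup" assume "m \<in> f ` Nset" then show "m \<in> Nset" using fN Nset_Tset by blast
next
  fix m :: "'a tup" assume m: "m \<in> Nset"
  then obtain n where "n \<in> Tset" "m = f n" using surj Nset_Tset by blast
  then show "m \<in> f ` Nset" using fN m by blast
qed

lemma Xs_ne_N: "p \<in> Sp \<Longrightarrow> Xs p \<noteq> (Nset :: 'a tup set)"
proof
  assume p: "p \<in> Sp" and e: "Xs p = (Nset :: 'a tup set)"
  have "(1, 1, 1, 1, 1) \<in> (Nset :: 'a tup set)" by (simp add: Nset_def)
  then have "(1, 1, 1, 1, 1) \<in> (Xs p :: 'a tup set)" using e by simp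
  then show False using p by (auto simp: Xs_def ax_def)
qed

lemma Xs_inj: "p \<in> Sp \<Longrightarrow> q \<in> Sp \<Longrightarrow> Xs p = (Xs q :: 'a tup set) \<Longrightarrow> p = q"
proof -
  assume pq: "p \<in> Sp" "q \<in> Sp" "Xs p = (Xs q :: 'a tup set)"
  have "ax p (1::'a) \<in> Xs q" using pq(3) by (auto simp: Xs_def)
  then show "p = q" using pq(1,2) by (auto simp: Xs_def ax_def)
qed

lemma f_Xs: assumes p: "p \<in> Sp" shows "\<exists>q\<in>Sp. f ` Xs p = Xs q"
proof -
  have "\<exists>g :: 'a tup. g \<in> Tset \<and> Cn g = Xs p"
  proof -
    have "p = (1,2) \<or> p = (2,3) \<or> p = (3,4)" using p by auto
    then show ?thesis
    proof (elim disjE)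
      assume "p = (1,2)" then show ?thesis using Cn_axes(1,4)[OF w] by (intro exI[of _ "(0,0,0,1,w)"]) simp
    next
      assume "p = (2,3)" then show ?thesis using Cn_axes[OF w] by blast
    next
      assume "p = (3,4)" then show ?thesis using Cn_axes[OF w] by blast
    qed
  qed
  then obtain g :: "'a tup" where g: "g \<in> Tset" "Cn g = Xs p" by blast
  have fg: "f ` Xs p = Cn (f g)" using f_Cn[OF g(1)] g(2) by simp
  have "f ` Xs p \<noteq> Nset"
  proof
    assume "f ` Xs p = Nset"
    then have "f ` Xs p = f ` Nset" using f_Nset by simp
    then have "Xs p = (Nset :: 'a tup set)" using inj_on_image_eq_iff[OF inj Xs_T Nset_Tset] by simp
    then show False using Xs_ne_N p by blast
  qed
  moreover have "f ` Xs p \<noteq> {(0, 0, 0, 1, 1)}"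
  proof
    assume h: "f ` Xs p = {(0, 0, 0, 1, 1)}"
    have "f (ax p 0) \<in> f ` Xs p" "f (ax p 1) \<in> f ` Xs p" by (auto simp: Xs_def)
    then have "f (ax p 0) = f (ax p 1)" using h by simp
    then have "ax p 0 = ax p (1::'a)" using f_eq ax_T by blast
    then show False using ax_inj by fastforce
  qed
  ultimately show ?thesis using Cn_cases[OF fT[OF g(1)]] fg by auto
qed

definition sig :: "nat \<times> nat \<Rightarrow> nat \<times> nat" where
  "sig p = (if p \<in> Sp then SOME q. q \<in> Sp \<and> f ` Xs p = Xs q else p)"

lemma sig_prop: "p \<in> Sp \<Longrightarrow> sig p \<in> Sp \<and> f ` Xs p = Xs (sig p)"
  unfolding sig_def using f_Xs by (simp add: Bex_def) (rule someI_ex, blast)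

lemma sig_permutes: "sig permutes Sp"
proof (rule bij_imp_permutes)
  have inj: "inj_on sig Sp"
  proof (rule inj_onI)
    fix p p' assume pp: "p \<in> Sp" "p' \<in> Sp" "sig p = sig p'"
    then have "f ` Xs p = f ` Xs p'" using sig_prop by metis
    then have "Xs p = (Xs p' :: 'a tup set)" using inj_on_image_eq_iff[OF inj Xs_T Xs_T] by simp
    then show "p = p'" using Xs_inj pp by blast
  qed
  moreover have "sig ` Sp \<subseteq> Sp" using sig_prop by blast
  ultimately have "sig ` Sp = Sp" using endo_inj_surj[of Sp sig] by simp
  then show "bij_betw sig Sp Sp" using inj by (simp add: bij_betw_def)
  show "\<And>x. x \<notin> Sp \<Longrightarrow> sig x = x" by (simp add: sig_def)
qed

definition Phi :: "nat \<times> nat \<Rightarrow> 'a \<Rightarrow> 'a" where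
  "Phi p r = crd (sig p) (f (ax p r))"

lemma f_ax: assumes p: "p \<in> Sp" shows "f (ax p r) = ax (sig p) (Phi p r)"
proof -
  have "f (ax p r) \<in> f ` Xs p" by (simp add: Xs_def)
  then have "f (ax p r) \<in> Xs (sig p)" using sig_prop[OF p] by simp
  then obtain s where "f (ax p r) = ax (sig p) s" by (auto simp: Xs_def)
  then show ?thesis by (simp add: Phi_def)
qed

lemma Phi_add: assumes p: "p \<in> Sp" shows "Phi p (x + y) = Phi p x + Phi p y"
proof -
  have q: "sig p \<in> Sp" using sig_prop[OF p] by blast
  have "ax (sig p) (Phi p (x + y)) = f (ax p (x + y))" using f_ax[OF p] by simp
  also have "... = tm (f (ax p x)) (f (ax p y))" by (simp only: ax_add[OF p] hom[OF ax_T ax_T])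
  also have "... = ax (sig p) (Phi p x + Phi p y)" by (simp only: f_ax[OF p] ax_add[OF q])
  finally show ?thesis using ax_inj by blast
qed

lemma Phi_bij: assumes p: "p \<in> Sp" shows "bij (Phi p)"
proof (rule bijI)
  show "inj (Phi p)"
  proof (rule injI)
    fix x y assume "Phi p x = Phi p y"
    then have "f (ax p x) = f (ax p y)" using f_ax[OF p] by simp
    then have "ax p x = ax p y" using f_eq ax_T by blast
    then show "x = y" using ax_inj by blast
  qed
  show "surj (Phi p)"
    unfolding surj_def
  proof
    fix s
    have "ax (sig p) s \<in> f ` Xs p" using sig_prop[OF p] by (simp add: Xs_def)
    then obtain r where r: "ax (sig p) s = f (ax p r)" by (auto simp: Xs_def)
    then have "ax (sig p) s = ax (sig p) (Phi p r)" using f_ax[OF p] by simp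
    then show "\<exists>r. s = Phi p r" using ax_inj by metis
  qed
qed

end




lemma elem_bar_ax0: "p \<in> Sp \<Longrightarrow> elem_bar (fst p) (snd p) r = Fb (ax p r)"
proof -
  assume "p \<in> Sp"
  then have "p = (1,2) \<or> p = (2,3) \<or> p = (3,4)" by auto
  then show ?thesis
  proof (elim disjE)
    assume e: "p = (1,2)" show ?thesis unfolding e fst_conv snd_conv elem_bar_F ax_def by simp
  next
    assume e: "p = (2,3)" show ?thesis unfolding e fst_conv snd_conv elem_bar_F ax_def by simp
  next
    assume e: "p = (3,4)" show ?thesis unfolding e fst_conv snd_conv elem_bar_F ax_def by simp
  qed
qed

lemma elem_bar_ax: "(i, j) \<in> Sp \<Longrightarrow> elem_bar i j r = Fb (ax (i, j) r)"
  using elem_bar_ax0[of "(i, j)"] by simp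

theorem mainTheorem11:
  fixes \<phi> :: "(nat \<Rightarrow> nat \<Rightarrow> 'a::idom) set \<Rightarrow> (nat \<Rightarrow> nat \<Rightarrow> 'a) set"
  assumes "\<exists>u::'a. u dvd 1 \<and> u \<noteq> 1"
    and "\<phi> \<in> iso A4bar A4bar"
  shows "\<exists>(\<sigma> :: nat \<times> nat \<Rightarrow> nat \<times> nat) (\<Phi> :: nat \<times> nat \<Rightarrow> 'a \<Rightarrow> 'a).
           \<sigma> permutes {(1,2),(2,3),(3,4)}
         \<and> (\<forall>p\<in>{(1,2),(2,3),(3,4)}. bij (\<Phi> p) \<and> (\<forall>x y. \<Phi> p (x + y) = \<Phi> p x + \<Phi> p y))
         \<and> (\<forall>i j. (i, j) \<in> {(1,2),(2,3),(3,4)} \<longrightarrow>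
               (\<forall>r. \<phi> (elem_bar i j r) = elem_bar (fst (\<sigma> (i, j))) (snd (\<sigma> (i, j))) (\<Phi> (i, j) r)))"
proof -
  obtain w :: 'a where w: "w dvd 1" "w \<noteq> 1" using assms(1) by blast
  have phom: "\<And>XX YY. XX \<in> carrier A4bar \<Longrightarrow> YY \<in> carrier A4bar \<Longrightarrow>
      \<phi> (XX \<otimes>\<^bsub>A4bar\<^esub> YY) = \<phi> XX \<otimes>\<^bsub>A4bar\<^esub> \<phi> YY"
    using assms(2) by (auto simp: iso_def hom_def)
  have pbij: "bij_betw \<phi> (carrier A4bar) (carrier A4bar)"
    using assms(2) by (auto simp: iso_def)
  then have pinj: "inj_on \<phi> (carrier A4bar)" and pimg: "\<phi> ` carrier A4bar = carrier A4bar"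
    by (auto simp: bij_betw_def)
  have CA: "carrier (A4bar :: (nat \<Rightarrow> nat \<Rightarrow> 'a) set monoid) = Fb ` Tset" by (rule carrier_A4bar)
  have Finj: "inj_on (Fb :: 'a tup \<Rightarrow> _) Tset" by (rule Fb_inj)
  define f :: "'a tup \<Rightarrow> 'a tup" where "f t = the_inv_into Tset Fb (\<phi> (Fb t))" for t
  have FbC: "Fb t \<in> carrier A4bar" if "t \<in> Tset" for t :: "'a tup"
    using that CA by blast
  have phiF: "\<phi> (Fb t) = Fb (f t) \<and> f t \<in> Tset" if t: "t \<in> Tset" for t
  proof -
    have "\<phi> (Fb t) \<in> Fb ` Tset" using FbC[OF t] pimg CA by blast
    then show ?thesis unfolding f_def
      using f_the_inv_into_f[OF Finj] the_inv_into_into[OF Finj _ subset_refl] by simp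
  qed
  have finj: "inj_on f Tset"
  proof (rule inj_onI)
    fix s t assume st: "s \<in> Tset" "t \<in> Tset" "f s = f t"
    then have "\<phi> (Fb s) = \<phi> (Fb t)" using phiF by metis
    then have "Fb s = Fb t" using inj_onD[OF pinj _ FbC[OF st(1)] FbC[OF st(2)]] by blast
    then show "s = t" using Finj st by (auto dest: inj_onD)
  qed
  have fimg: "f ` Tset = Tset"
  proof (rule equalityI; rule subsetI)
    fix t assume "t \<in> f ` Tset" then show "t \<in> Tset" using phiF by blast
  next
    fix t :: "'a tup" assume t: "t \<in> Tset"
    then have "Fb t \<in> \<phi> ` carrier A4bar" using FbC pimg by simp
    then obtain X0 where X0: "X0 \<in> carrier A4bar" "Fb t = \<phi> X0" by auto
    then obtain s where s0: "s \<in> Tset" "X0 = Fb s" using CA by auto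
    then have s: "s \<in> Tset" "Fb t = \<phi> (Fb s)" using X0 by auto
    then have "Fb t = Fb (f s)" using phiF by simp
    moreover have "f s \<in> Tset" using phiF s by blast
    ultimately have "t = f s" using inj_onD[OF Finj _ t] by blast
    then show "t \<in> f ` Tset" using s by blast
  qed
  have fhom: "f (tm s t) = tm (f s) (f t)" if st: "s \<in> Tset" "t \<in> Tset" for s t
  proof -
    have ts: "tm s t \<in> Tset" using tm_Tset st by blast
    have "Fb (f (tm s t)) = \<phi> (Fb (tm s t))" using phiF[OF ts] by simp
    also have "... = \<phi> (Fb s \<otimes>\<^bsub>A4bar\<^esub> Fb t)" by (metis Fb_mult st)
    also have "... = \<phi> (Fb s) \<otimes>\<^bsub>A4bar\<^esub> \<phi> (Fb t)" using phom FbC st by metis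
    also have "... = Fb (tm (f s) (f t))" using phiF st Fb_mult by metis
    finally have "Fb (f (tm s t)) = Fb (tm (f s) (f t))" .
    moreover have "f (tm s t) \<in> Tset" using phiF[OF ts] by blast
    moreover have "tm (f s) (f t) \<in> Tset" using phiF st tm_Tset by blast
    ultimately show ?thesis using inj_onD[OF Finj] by blast
  qed
  interpret T: tauto f w
    by unfold_locales (auto simp: bij_betw_def finj fimg fhom w)
  show ?thesis
  proof (intro exI conjI)
    show "T.sig permutes Sp" by (rule T.sig_permutes)
    show "\<forall>p\<in>Sp. bij (T.Phi p) \<and> (\<forall>x y. T.Phi p (x + y) = T.Phi p x + T.Phi p y)"
      using T.Phi_bij T.Phi_add by blast
    show "\<forall>i j. (i, j) \<in> Sp \<longrightarrow> (\<forall>r. \<phi> (elem_bar i j r) =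
        elem_bar (fst (T.sig (i, j))) (snd (T.sig (i, j))) (T.Phi (i, j) r))"
    proof (intro allI impI)
      fix i j r assume p: "(i, j) \<in> Sp"
      have q: "T.sig (i, j) \<in> Sp" using T.sig_prop[OF p] by blast
      have "\<phi> (elem_bar i j r) = \<phi> (Fb (ax (i, j) r))" by (rule arg_cong[where f=\<phi>], rule elem_bar_ax[OF p])
      also have "... = Fb (f (ax (i, j) r))" using phiF[OF ax_T] by blast
      also have "... = Fb (ax (T.sig (i, j)) (T.Phi (i, j) r))" using T.f_ax[OF p] by simp
      also have "... = elem_bar (fst (T.sig (i, j))) (snd (T.sig (i, j))) (T.Phi (i, j) r)"
        using elem_bar_ax0[OF q] by metis
      finally show "\<phi> (elem_bar i j r) = elem_bar (fst (T.sig (i, j))) (snd (T.sig (i, j))) (T.Phi (i, j) r)" .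
    qed
  qed
qed


end
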